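(* Let $J=JCK(Z,\delta)$. Relative to the $\mathbb Z_2^2$-grading of $\mathrm{Der}(J)$ induced by that of $J$, $\mathrm{Der}(J)_{\bar1}^{[\bar0,\bar0]}=D(Z,Zx)=\{\tilde\eta_a:a\in Z\}$, $\mathrm{Der}(J)_{\bar1}^{[\bar1,\bar0]}=D(w_1,Zx)$, $\mathrm{Der}(J)_{\bar1}^{[\bar0,\bar1]}=D(w_2,Zx)$, $\mathrm{Der}(J)_{\bar1}^{[\bar1,\bar1]}=D(w_3,Zx)$, and $\mathrm{Der}(J)_{\bar1}$ is the direct sum of these components.
   Context: Let $\mathbb F$ be a field of characteristic $\neq 2$, $Z$ a unital commutative associative $\mathbb F$-algebra, and $\delta$ a derivation of $Z$ such that $Z\delta(Z)=Z$ (the $\mathbb F$-span of all products $f\delta(g)$, $f,g\in Z$, is $Z$). The Cheng-Kac Jordan superalgebra $J=JCK(Z,\delta)=J_{\bar0}\oplus J_{\bar1}$ is defined as follows: $J_{\bar0}=Z1\oplus Zw_1\oplus Zw_2\oplus Zw_3$ and $J_{\bar1}=Zx\oplus Zx_1\oplus Zx_2\oplus Zx_3$ are free $Z$-modules of rank 4; $J_{\bar0}$ is the $Z$-algebra $(\mathbb F1\oplus\mathbb Fw_1\oplus\mathbb Fw_2\oplus\mathbb Fw_3)\otimes_{\mathbb F}Z$ with $1$ the identity, $w_1^2=w_2^2=1$, $w_3^2=-1$, $w_iw_j=0$ for $i\ne j$. For $f,g\in Z$ and $i,j\in\{1,2,3\}$ the remaining products are: $f(gx)=(fg)x$, $f(gx_j)=(fg)x_j$,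 $(fw_i)(gx)=(\delta(f)g)x_i$, $(fw_i)(gx_j)=-(fg)x_{i\times j}$, $(fx)(gx)=\delta(f)g-f\delta(g)$, $(fx)(gx_j)=-(fg)w_j$, $(fx_i)(gx)=(fg)w_i$, $(fx_i)(gx_j)=0$, extended by supercommutativity ($ab=(-1)^{|a||b|}ba$), where $x_{1\times2}=-x_{2\times1}=x_3$, $x_{1\times3}=-x_{3\times1}=x_2$, $x_{3\times2}=-x_{2\times3}=x_1$, $x_{i\times i}=0$. $J$ is $\mathbb Z_2^2$-graded by $J^{[\bar0,\bar0]}=Z\oplus Zx$, $J^{[\bar1,\bar0]}=Zw_1\oplus Zx_1$, $J^{[\bar0,\bar1]}=Zw_2\oplus Zx_2$, $J^{[\bar1,\bar1]}=Zw_3\oplus Zx_3$, and $\mathrm{Der}(J)^{\alpha}$ denotes the derivations mapping each $J^{\beta}$ into $J^{\alpha+\beta}$. Derivations are super derivations (homogeneous $d$ with $d(ab)=d(a)b+(-1)^{|d||a|}ad(b)$); $D(a,b)$ is $c\mapsto a(bc)-(-1)^{|a||b|}b(ac)$; $D(A,B)$ denotes the span of $D(a,b)$, $a\in A,b\in B$. For $a\in Z$, $\tilde\eta_a$ is the odd derivation of $J$ with $\tilde\eta_a(Z)=0$, $\tilde\eta_a(x)=a$, $\tilde\eta_a(x_j)=0$ for $j=1,2,3$. *)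

theory Defs
  imports Main
begin

text \<open>The base field F is a type 'f; the F-algebra structure on the unital commutative
  ring Z (type 'z) is given by a unital ring homomorphism emb : F -> Z, scalar
  multiplication being c.z = emb c * z.  Elements of J are coefficient functions
  on the Z-basis 1, w1, w2, w3, x, x1, x2, x3.\<close>

datatype idx = I1 | I2 | I3

datatype cb = One | W idx | X0 | Xi idx

definition basis :: "cb list" where
  "basis = [One, W I1, W I2, W I3, X0, Xi I1, Xi I2, Xi I3]"

text \<open>x_{i x j} = xsgn i j * x_{xidx i j}\<close>
fun xsgn :: "idx \<Rightarrow> idx \<Rightarrow> 'z::comm_ring_1" where
  "xsgn I1 I2 = 1" | "xsgn I2 I1 = -1"
| "xsgn I1 I3 = 1" | "xsgn I3 I1 = -1"
| "xsgn I3 I2 = 1" | "xsgn I2 I3 = -1"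
| "xsgn _ _ = 0"

fun xidx :: "idx \<Rightarrow> idx \<Rightarrow> idx" where
  "xidx I1 I2 = I3" | "xidx I2 I1 = I3"
| "xidx I1 I3 = I2" | "xidx I3 I1 = I2"
| "xidx I3 I2 = I1" | "xidx I2 I3 = I1"
| "xidx i _ = i"

type_synonym 'z jel = "cb \<Rightarrow> 'z"

definition mon :: "'z::comm_ring_1 \<Rightarrow> cb \<Rightarrow> 'z jel" where
  "mon f e = (\<lambda>c. if c = e then f else 0)"

text \<open>product (f e1)(g e2) of two monomials\<close>
fun bm :: "('z::comm_ring_1 \<Rightarrow> 'z) \<Rightarrow> cb \<Rightarrow> 'z \<Rightarrow> cb \<Rightarrow> 'z \<Rightarrow> 'z jel" where
  "bm \<delta> One f One g = mon (f * g) One"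
| "bm \<delta> One f (W j) g = mon (f * g) (W j)"
| "bm \<delta> One f X0 g = mon (f * g) X0"
| "bm \<delta> One f (Xi j) g = mon (f * g) (Xi j)"
| "bm \<delta> (W i) f One g = mon (f * g) (W i)"
| "bm \<delta> (W i) f (W j) g = (if i = j then mon ((if i = I3 then -1 else 1) * f * g) One else mon 0 One)"
| "bm \<delta> (W i) f X0 g = mon (\<delta> f * g) (Xi i)"
| "bm \<delta> (W i) f (Xi j) g = mon (- (xsgn i j * f * g)) (Xi (xidx i j))"
| "bm \<delta> X0 f One g = mon (f * g) X0"
| "bm \<delta> X0 f (W i) g = mon (\<delta> g * f) (Xi i)"
| "bm \<delta> X0 f X0 g = mon (\<delta> f * g - f * \<delta> g) One"
| "bm \<delta> X0 f (Xi j) g = mon (- (f * g)) (W j)"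
| "bm \<delta> (Xi i) f One g = mon (f * g) (Xi i)"
| "bm \<delta> (Xi i) f (W j) g = mon (- (xsgn j i * f * g)) (Xi (xidx j i))"
| "bm \<delta> (Xi i) f X0 g = mon (f * g) (W i)"
| "bm \<delta> (Xi i) f (Xi j) g = mon 0 One"

definition jmul :: "('z::comm_ring_1 \<Rightarrow> 'z) \<Rightarrow> 'z jel \<Rightarrow> 'z jel \<Rightarrow> 'z jel" where
  "jmul \<delta> a b = (\<lambda>c. sum_list (map (\<lambda>e1. sum_list (map (\<lambda>e2. bm \<delta> e1 (a e1) e2 (b e2) c) basis)) basis))"

definition jadd :: "'z::comm_ring_1 jel \<Rightarrow> 'z jel \<Rightarrow> 'z jel" where
  "jadd a b = (\<lambda>c. a c + b c)"

definition jsub :: "'z::comm_ring_1 jel \<Rightarrow> 'z jel \<Rightarrow> 'z jel" where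
  "jsub a b = (\<lambda>c. a c - b c)"

fun odd_cb :: "cb \<Rightarrow> bool" where
  "odd_cb One = False" | "odd_cb (W i) = False" | "odd_cb X0 = True" | "odd_cb (Xi i) = True"

definition Jpar :: "bool \<Rightarrow> 'z::comm_ring_1 jel set" where
  "Jpar p = {a. \<forall>e. odd_cb e \<noteq> p \<longrightarrow> a e = 0}"

fun deg :: "cb \<Rightarrow> bool \<times> bool" where
  "deg One = (False, False)" | "deg X0 = (False, False)"
| "deg (W I1) = (True, False)" | "deg (Xi I1) = (True, False)"
| "deg (W I2) = (False, True)" | "deg (Xi I2) = (False, True)"
| "deg (W I3) = (True, True)" | "deg (Xi I3) = (True, True)"

definition Jdeg :: "bool \<times> bool \<Rightarrow> 'z::comm_ring_1 jel set" where
  "Jdeg \<alpha> = {a. \<forall>e. deg e \<noteq> \<alpha> \<longrightarrow> a e = 0}"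

definition gadd :: "bool \<times> bool \<Rightarrow> bool \<times> bool \<Rightarrow> bool \<times> bool" where
  "gadd \<alpha> \<beta> = (fst \<alpha> \<noteq> fst \<beta>, snd \<alpha> \<noteq> snd \<beta>)"

definition alg_emb :: "('f::field \<Rightarrow> 'z::comm_ring_1) \<Rightarrow> bool" where
  "alg_emb emb \<longleftrightarrow> emb 1 = 1 \<and> (\<forall>a b. emb (a + b) = emb a + emb b) \<and> (\<forall>a b. emb (a * b) = emb a * emb b)"

definition is_derivation :: "('f::field \<Rightarrow> 'z::comm_ring_1) \<Rightarrow> ('z \<Rightarrow> 'z) \<Rightarrow> bool" where
  "is_derivation emb \<delta> \<longleftrightarrow>
     (\<forall>a b. \<delta> (a + b) = \<delta> a + \<delta> b) \<and> (\<forall>c a. \<delta> (emb c * a) = emb c * \<delta> a) \<and>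
     (\<forall>a b. \<delta> (a * b) = \<delta> a * b + a * \<delta> b)"

text \<open>Z delta(Z) = Z: the F-span of all f * delta g is Z\<close>
definition Z_delta_Z :: "('f::field \<Rightarrow> 'z::comm_ring_1) \<Rightarrow> ('z \<Rightarrow> 'z) \<Rightarrow> bool" where
  "Z_delta_Z emb \<delta> \<longleftrightarrow> (\<forall>z. \<exists>(n::nat) c f g. z = (\<Sum>k<n. emb (c k) * (f k * \<delta> (g k))))"

definition flinear :: "('f::field \<Rightarrow> 'z::comm_ring_1) \<Rightarrow> ('z jel \<Rightarrow> 'z jel) \<Rightarrow> bool" where
  "flinear emb d \<longleftrightarrow> (\<forall>a b. d (jadd a b) = jadd (d a) (d b)) \<and>
                      (\<forall>c a. d (\<lambda>e. emb c * a e) = (\<lambda>e. emb c * d a e))"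

definition odd_der :: "('f::field \<Rightarrow> 'z::comm_ring_1) \<Rightarrow> ('z \<Rightarrow> 'z) \<Rightarrow> ('z jel \<Rightarrow> 'z jel) \<Rightarrow> bool" where
  "odd_der emb \<delta> d \<longleftrightarrow> flinear emb d \<and>
     (\<forall>p. \<forall>a \<in> Jpar p. d a \<in> Jpar (\<not> p)) \<and>
     (\<forall>p q. \<forall>a \<in> Jpar p. \<forall>b \<in> Jpar q.
        d (jmul \<delta> a b) = (if p then jsub (jmul \<delta> (d a) b) (jmul \<delta> a (d b))
                                else jadd (jmul \<delta> (d a) b) (jmul \<delta> a (d b))))"

definition Der1 :: "('f::field \<Rightarrow> 'z::comm_ring_1) \<Rightarrow> ('z \<Rightarrow> 'z) \<Rightarrow> bool \<times> bool \<Rightarrow> ('z jel \<Rightarrow> 'z jel) set" where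
  "Der1 emb \<delta> \<alpha> = {d. odd_der emb \<delta> d \<and> (\<forall>\<beta>. \<forall>a \<in> Jdeg \<beta>. d a \<in> Jdeg (gadd \<alpha> \<beta>))}"

text \<open>D(a,b)(c) = a(bc) - (-1)^{|a||b|} b(ac), for a of parity p and b of parity q\<close>
definition Dop :: "('z::comm_ring_1 \<Rightarrow> 'z) \<Rightarrow> bool \<Rightarrow> bool \<Rightarrow> 'z jel \<Rightarrow> 'z jel \<Rightarrow> 'z jel \<Rightarrow> 'z jel" where
  "Dop \<delta> p q a b = (\<lambda>c. \<lambda>e. jmul \<delta> a (jmul \<delta> b c) e
                          - (if p \<and> q then -1 else 1) * jmul \<delta> b (jmul \<delta> a c) e)"

definition fspan :: "('f::field \<Rightarrow> 'z::comm_ring_1) \<Rightarrow> ('z jel \<Rightarrow> 'z jel) set \<Rightarrow> ('z jel \<Rightarrow> 'z jel) set" where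
  "fspan emb S = {d. \<exists>(n::nat) c s. (\<forall>k<n. s k \<in> S) \<and>
                       d = (\<lambda>a e. \<Sum>k<n. emb (c k) * s k a e)}"

definition eta_tilde :: "('f::field \<Rightarrow> 'z::comm_ring_1) \<Rightarrow> ('z \<Rightarrow> 'z) \<Rightarrow> 'z \<Rightarrow> ('z jel \<Rightarrow> 'z jel)" where
  "eta_tilde emb \<delta> a = (THE d. odd_der emb \<delta> d \<and> (\<forall>f. d (mon f One) = mon 0 One) \<and>
                           d (mon 1 X0) = mon a One \<and> (\<forall>j. d (mon 1 (Xi j)) = mon 0 One))"

end

theory Submission
  imports Defs
begin


lemma jm_One: "jmul \<delta> a b One = a One * b One + a (W I1) * b (W I1) + a (W I2) * b (W I2) - a (W I3) * b (W I3) + (\<delta> (a X0) * b X0 - a X0 * \<delta> (b X0))"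
  by (simp add: jmul_def basis_def mon_def algebra_simps)
lemma jm_X0: "jmul \<delta> a b X0 = a One * b X0 + a X0 * b One"
  by (simp add: jmul_def basis_def mon_def algebra_simps)
lemma jm_W1: "jmul \<delta> a b (W I1) = a One * b (W I1) + a (W I1) * b One - a X0 * b (Xi I1) + a (Xi I1) * b X0"
  by (simp add: jmul_def basis_def mon_def algebra_simps)
lemma jm_W2: "jmul \<delta> a b (W I2) = a One * b (W I2) + a (W I2) * b One - a X0 * b (Xi I2) + a (Xi I2) * b X0"
  by (simp add: jmul_def basis_def mon_def algebra_simps)
lemma jm_W3: "jmul \<delta> a b (W I3) = a One * b (W I3) + a (W I3) * b One - a X0 * b (Xi I3) + a (Xi I3) * b X0"
  by (simp add: jmul_def basis_def mon_def algebra_simps)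
lemma jm_X1: "jmul \<delta> a b (Xi I1) = a One * b (Xi I1) + a (Xi I1) * b One + \<delta> (a (W I1)) * b X0 + \<delta> (b (W I1)) * a X0
   - a (W I3) * b (Xi I2) + a (W I2) * b (Xi I3) - a (Xi I2) * b (W I3) + a (Xi I3) * b (W I2)"
  by (simp add: jmul_def basis_def mon_def algebra_simps)



lemma jm_X2: "jmul \<delta> a b (Xi I2) = a One * b (Xi I2) + a (Xi I2) * b One + \<delta> (a (W I2)) * b X0 + \<delta> (b (W I2)) * a X0
   - a (W I1) * b (Xi I3) + a (W I3) * b (Xi I1) - a (Xi I3) * b (W I1) + a (Xi I1) * b (W I3)"
  by (simp add: jmul_def basis_def mon_def algebra_simps)
lemma jm_X3: "jmul \<delta> a b (Xi I3) = a One * b (Xi I3) + a (Xi I3) * b One + \<delta> (a (W I3)) * b X0 + \<delta> (b (W I3)) * a X0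
   - a (W I1) * b (Xi I2) + a (W I2) * b (Xi I1) - a (Xi I2) * b (W I1) + a (Xi I1) * b (W I2)"
  by (simp add: jmul_def basis_def mon_def algebra_simps)

lemma cb8: obtains "e = One" | "e = X0" | "e = W I1" | "e = W I2" | "e = W I3" | "e = Xi I1" | "e = Xi I2" | "e = Xi I3"
proof (cases e)
  case (W i) then show ?thesis using that by (cases i) auto
next
  case (Xi i) then show ?thesis using that by (cases i) auto
qed (use that in auto)

lemmas jm = jm_One jm_X0 jm_W1 jm_W2 jm_W3 jm_X1 jm_X2 jm_X3

fun Gx :: "('z::comm_ring_1 \<Rightarrow> 'z) \<Rightarrow> idx \<Rightarrow> 'z \<Rightarrow> 'z jel \<Rightarrow> 'z jel" where
  "Gx \<delta> I1 g c One = - (g * c (Xi I1))"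
| "Gx \<delta> I1 g c X0 = - (g * c (W I1))"
| "Gx \<delta> I1 g c (W I1) = c X0 * \<delta> g - g * \<delta> (c X0)"
| "Gx \<delta> I1 g c (W I2) = - (g * c (Xi I3))"
| "Gx \<delta> I1 g c (W I3) = - (g * c (Xi I2))"
| "Gx \<delta> I1 g c (Xi I1) = - (g * \<delta> (c One))"
| "Gx \<delta> I1 g c (Xi I2) = - (g * \<delta> (c (W I3)))"
| "Gx \<delta> I1 g c (Xi I3) = - (g * \<delta> (c (W I2)))"
| "Gx \<delta> I2 g c One = - (g * c (Xi I2))"
| "Gx \<delta> I2 g c X0 = - (g * c (W I2))"
| "Gx \<delta> I2 g c (W I2) = c X0 * \<delta> g - g * \<delta> (c X0)"
| "Gx \<delta> I2 g c (W I3) = g * c (Xi I1)"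
| "Gx \<delta> I2 g c (W I1) = g * c (Xi I3)"
| "Gx \<delta> I2 g c (Xi I2) = - (g * \<delta> (c One))"
| "Gx \<delta> I2 g c (Xi I3) = g * \<delta> (c (W I1))"
| "Gx \<delta> I2 g c (Xi I1) = g * \<delta> (c (W I3))"
| "Gx \<delta> I3 g c One = g * c (Xi I3)"
| "Gx \<delta> I3 g c X0 = g * c (W I3)"
| "Gx \<delta> I3 g c (W I3) = c X0 * \<delta> g - g * \<delta> (c X0)"
| "Gx \<delta> I3 g c (W I2) = g * c (Xi I1)"
| "Gx \<delta> I3 g c (W I1) = - (g * c (Xi I2))"
| "Gx \<delta> I3 g c (Xi I3) = - (g * \<delta> (c One))"
| "Gx \<delta> I3 g c (Xi I2) = g * \<delta> (c (W I1))"
| "Gx \<delta> I3 g c (Xi I1) = - (g * \<delta> (c (W I2)))"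

definition eta :: "'z::comm_ring_1 \<Rightarrow> 'z jel \<Rightarrow> 'z jel" where
  "eta a c = (\<lambda>e. case e of One \<Rightarrow> a * c X0 | Xi i \<Rightarrow> - (a * c (W i)) | _ \<Rightarrow> 0)"

locale ck =
  fixes emb :: "'f::field \<Rightarrow> 'z::comm_ring_1" and \<delta> :: "'z \<Rightarrow> 'z"
  assumes emb: "alg_emb emb" and der: "is_derivation emb \<delta>"
begin

lemma d_add[simp]: "\<delta> (a + b) = \<delta> a + \<delta> b" using der by (simp add: is_derivation_def)
lemma d_mult[simp]: "\<delta> (a * b) = \<delta> a * b + a * \<delta> b" using der by (simp add: is_derivation_def)
lemma d_zero[simp]: "\<delta> 0 = 0" using d_add[of 0 0] by simp
lemma d_one[simp]: "\<delta> 1 = 0" using d_mult[of 1 1] by simp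
lemma d_minus[simp]: "\<delta> (- a) = - \<delta> a" using d_add[of a "-a"] by (simp add: eq_neg_iff_add_eq_0 add.commute)
lemma d_diff[simp]: "\<delta> (a - b) = \<delta> a - \<delta> b" using d_add[of a "-b"] by simp
lemma d_emb[simp]: "\<delta> (emb c * a) = emb c * \<delta> a" using der by (simp add: is_derivation_def)

end



lemma Jpar_T: "a \<in> Jpar True \<longleftrightarrow> a One = 0 \<and> a (W I1) = 0 \<and> a (W I2) = 0 \<and> a (W I3) = 0"
  unfolding Jpar_def apply auto subgoal for e by (cases e rule: cb8) auto done
lemma Jpar_F: "a \<in> Jpar False \<longleftrightarrow> a X0 = 0 \<and> a (Xi I1) = 0 \<and> a (Xi I2) = 0 \<and> a (Xi I3) = 0"
  unfolding Jpar_def apply auto subgoal for e by (cases e rule: cb8) auto done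
lemma Jdeg_expl: "a \<in> Jdeg \<beta> \<longleftrightarrow> (deg One \<noteq> \<beta> \<longrightarrow> a One = 0) \<and> (deg X0 \<noteq> \<beta> \<longrightarrow> a X0 = 0)
  \<and> (deg (W I1) \<noteq> \<beta> \<longrightarrow> a (W I1) = 0) \<and> (deg (W I2) \<noteq> \<beta> \<longrightarrow> a (W I2) = 0) \<and> (deg (W I3) \<noteq> \<beta> \<longrightarrow> a (W I3) = 0)
  \<and> (deg (Xi I1) \<noteq> \<beta> \<longrightarrow> a (Xi I1) = 0) \<and> (deg (Xi I2) \<noteq> \<beta> \<longrightarrow> a (Xi I2) = 0) \<and> (deg (Xi I3) \<noteq> \<beta> \<longrightarrow> a (Xi I3) = 0)"
  unfolding Jdeg_def mem_Collect_eq apply (rule iffI) apply blast apply (intro allI impI) subgoal for e by (cases e rule: cb8) auto done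

lemma mon_par: "mon h e \<in> Jpar (odd_cb e)"
  unfolding Jpar_def mon_def by auto

context ck begin
lemma d_embc[simp]: "\<delta> (emb c) = 0" using d_emb[of c 1] by simp

lemma Gx_der:
  assumes "a \<in> Jpar p" "b \<in> Jpar q"
  shows "Gx \<delta> i g (jmul \<delta> a b) = (if p then jsub (jmul \<delta> (Gx \<delta> i g a) b) (jmul \<delta> a (Gx \<delta> i g b))
                                else jadd (jmul \<delta> (Gx \<delta> i g a) b) (jmul \<delta> a (Gx \<delta> i g b)))"
  apply (rule ext)
  subgoal for e
    using assms
    by (cases p; cases q; cases i; cases e rule: cb8; simp add: Jpar_T Jpar_F jm jsub_def jadd_def; simp add: algebra_simps)
  done

lemma Gx_odd: "odd_der emb \<delta> (Gx \<delta> i g)"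
  unfolding odd_der_def flinear_def
proof (intro conjI allI ballI)
  fix a b show "Gx \<delta> i g (jadd a b) = jadd (Gx \<delta> i g a) (Gx \<delta> i g b)"
    apply (rule ext) subgoal for e by (cases i; cases e rule: cb8; simp add: jadd_def algebra_simps) done
next
  fix c a show "Gx \<delta> i g (\<lambda>e. emb c * a e) = (\<lambda>e. emb c * Gx \<delta> i g a e)"
    apply (rule ext) subgoal for e by (cases i; cases e rule: cb8; simp add: algebra_simps) done
next
  fix p and a :: "'z jel" assume "a \<in> Jpar p" then show "Gx \<delta> i g a \<in> Jpar (\<not> p)"
    by (cases p; cases i; simp add: Jpar_T Jpar_F)
next
  fix p q and a b :: "'z jel" assume "a \<in> Jpar p" "b \<in> Jpar q" then show
    "Gx \<delta> i g (jmul \<delta> a b) = (if p then jsub (jmul \<delta> (Gx \<delta> i g a) b) (jmul \<delta> a (Gx \<delta> i g b))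
                                else jadd (jmul \<delta> (Gx \<delta> i g a) b) (jmul \<delta> a (Gx \<delta> i g b)))"
    by (rule Gx_der)
qed

lemma eta_odd: "odd_der emb \<delta> (eta r)"
  unfolding odd_der_def flinear_def
proof (intro conjI allI ballI)
  fix a b show "eta r (jadd a b) = jadd (eta r a) (eta r b)"
    apply (rule ext) subgoal for e by (cases e rule: cb8; simp add: jadd_def eta_def algebra_simps) done
next
  fix c a show "eta r (\<lambda>e. emb c * a e) = (\<lambda>e. emb c * eta r a e)"
    apply (rule ext) subgoal for e by (cases e rule: cb8; simp add: eta_def algebra_simps) done
next
  fix p and a :: "'z jel" assume "a \<in> Jpar p" then show "eta r a \<in> Jpar (\<not> p)"
    by (cases p; simp add: Jpar_T Jpar_F eta_def)
next
  fix p q and a b :: "'z jel" assume ab: "a \<in> Jpar p" "b \<in> Jpar q" then show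
    "eta r (jmul \<delta> a b) = (if p then jsub (jmul \<delta> (eta r a) b) (jmul \<delta> a (eta r b))
                                else jadd (jmul \<delta> (eta r a) b) (jmul \<delta> a (eta r b)))"
    apply (intro ext)
    subgoal for e
    using ab
    by (cases p; cases q; cases e rule: cb8; simp add: Jpar_T Jpar_F jm jsub_def jadd_def eta_def; simp add: algebra_simps)
  done
qed

lemma jmul_addL: "jmul \<delta> (\<lambda>e. u e + v e) b = (\<lambda>e. jmul \<delta> u b e + jmul \<delta> v b e)"
  apply (rule ext) subgoal for e by (cases e rule: cb8; simp add: jm algebra_simps) done
lemma jmul_addR: "jmul \<delta> b (\<lambda>e. u e + v e) = (\<lambda>e. jmul \<delta> b u e + jmul \<delta> b v e)"
  apply (rule ext) subgoal for e by (cases e rule: cb8; simp add: jm algebra_simps) done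

lemma odd_derD:
  assumes "odd_der emb \<delta> d"
  shows "d (jadd a b) = jadd (d a) (d b)" "d (\<lambda>e. emb c * a e) = (\<lambda>e. emb c * d a e)"
    "a \<in> Jpar p \<Longrightarrow> d a \<in> Jpar (\<not> p)"
    "a \<in> Jpar p \<Longrightarrow> b \<in> Jpar q \<Longrightarrow> d (jmul \<delta> a b) = (if p then jsub (jmul \<delta> (d a) b) (jmul \<delta> a (d b))
                                else jadd (jmul \<delta> (d a) b) (jmul \<delta> a (d b)))"
  using assms unfolding odd_der_def flinear_def by blast+

lemma odd_add:
  assumes A: "odd_der emb \<delta> d1" and B: "odd_der emb \<delta> d2"
  shows "odd_der emb \<delta> (\<lambda>a e. d1 a e + d2 a e)"
  unfolding odd_der_def flinear_def
proof (intro conjI allI ballI)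
  fix a b show "(\<lambda>e. d1 (jadd a b) e + d2 (jadd a b) e) = jadd (\<lambda>e. d1 a e + d2 a e) (\<lambda>e. d1 b e + d2 b e)"
    by (simp only: odd_derD(1)[OF A] odd_derD(1)[OF B]) (simp add: jadd_def algebra_simps)
next
  fix c a show "(\<lambda>e. d1 (\<lambda>e. emb c * a e) e + d2 (\<lambda>e. emb c * a e) e) = (\<lambda>e. emb c * (d1 a e + d2 a e))"
    by (simp only: odd_derD(2)[OF A] odd_derD(2)[OF B]) (simp add: algebra_simps)
next
  fix p and a :: "'z jel" assume "a \<in> Jpar p"
  then have "d1 a \<in> Jpar (\<not> p)" "d2 a \<in> Jpar (\<not> p)" using odd_derD(3)[OF A] odd_derD(3)[OF B] by auto
  then show "(\<lambda>e. d1 a e + d2 a e) \<in> Jpar (\<not> p)"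
    unfolding Jpar_def by simp
next
  fix p q and a b :: "'z jel" assume ab: "a \<in> Jpar p" "b \<in> Jpar q"
  note 1 = odd_derD(4)[OF A ab] and 2 = odd_derD(4)[OF B ab]
  show "(\<lambda>e. d1 (jmul \<delta> a b) e + d2 (jmul \<delta> a b) e) =
       (if p then jsub (jmul \<delta> (\<lambda>e. d1 a e + d2 a e) b) (jmul \<delta> a (\<lambda>e. d1 b e + d2 b e))
        else jadd (jmul \<delta> (\<lambda>e. d1 a e + d2 a e) b) (jmul \<delta> a (\<lambda>e. d1 b e + d2 b e)))"
    by (simp add: 1 2 jmul_addL jmul_addR jsub_def jadd_def algebra_simps)
qed

end



context ck begin

lemma eta_Der1: "eta r \<in> Der1 emb \<delta> (False, False)"
  unfolding Der1_def
proof (intro CollectI conjI allI ballI eta_odd)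
  fix \<beta> and a :: "'z jel" assume "a \<in> Jdeg \<beta>"
  then show "eta r a \<in> Jdeg (gadd (False, False) \<beta>)"
    by (cases \<beta>; rename_tac b1 b2; case_tac b1; case_tac b2; simp add: Jdeg_expl eta_def gadd_def)
qed

lemma G_Der1: "Gx \<delta> i g \<in> Der1 emb \<delta> (deg (W i))"
  unfolding Der1_def
proof (intro CollectI conjI allI ballI Gx_odd)
  fix \<beta> and a :: "'z jel" assume "a \<in> Jdeg \<beta>"
  then show "Gx \<delta> i g a \<in> Jdeg (gadd (deg (W i)) \<beta>)"
    by (cases \<beta>; rename_tac b1 b2; case_tac b1; case_tac b2; cases i; simp add: Jdeg_expl gadd_def)
qed

definition sumall :: "'z jel \<Rightarrow> 'z jel" where
  "sumall a = jadd (mon (a One) One) (jadd (mon (a X0) X0) (jadd (mon (a (W I1)) (W I1))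
     (jadd (mon (a (W I2)) (W I2)) (jadd (mon (a (W I3)) (W I3)) (jadd (mon (a (Xi I1)) (Xi I1))
     (jadd (mon (a (Xi I2)) (Xi I2)) (mon (a (Xi I3)) (Xi I3))))))))"

lemma sumall: "a = sumall a"
  unfolding sumall_def
  apply (rule ext) subgoal for e by (cases e rule: cb8; simp add: jadd_def mon_def) done

lemma mul_oneX0: "jmul \<delta> (mon h One) (mon 1 X0) = mon h X0"
  apply (rule ext) subgoal for e by (cases e rule: cb8; simp add: jm mon_def) done
lemma mul_oneXi: "jmul \<delta> (mon h One) (mon 1 (Xi i)) = mon h (Xi i)"
  apply (rule ext) subgoal for e by (cases i; cases e rule: cb8; simp add: jm mon_def) done
lemma mul_XiX0: "jmul \<delta> (mon h (Xi i)) (mon 1 X0) = mon h (W i)"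
  apply (rule ext) subgoal for e by (cases i; cases e rule: cb8; simp add: jm mon_def) done

lemma par_One: "mon h One \<in> Jpar False" and par_X0: "mon h X0 \<in> Jpar True"
  and par_W: "mon h (W i) \<in> Jpar False" and par_Xi: "mon h (Xi i) \<in> Jpar True"
  using mon_par[of h One] mon_par[of h X0] mon_par[of h "W i"] mon_par[of h "Xi i"] by simp_all

lemma det:
  assumes A: "odd_der emb \<delta> d1" and B: "odd_der emb \<delta> d2"
    and h1: "\<And>f. d1 (mon f One) = d2 (mon f One)"
    and h2: "d1 (mon 1 X0) = d2 (mon 1 X0)"
    and h3: "\<And>i. d1 (mon 1 (Xi i)) = d2 (mon 1 (Xi i))"
  shows "d1 = d2"
proof -
  have X0: "d1 (mon h X0) = d2 (mon h X0)" for h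
    using odd_derD(4)[OF A par_One par_X0, of h 1] odd_derD(4)[OF B par_One par_X0, of h 1]
      h1 h2 by (simp add: mul_oneX0)
  have Xi: "d1 (mon h (Xi i)) = d2 (mon h (Xi i))" for h i
    using odd_derD(4)[OF A par_One par_Xi, of h 1 i] odd_derD(4)[OF B par_One par_Xi, of h 1 i]
      h1 h3 by (simp add: mul_oneXi)
  have Wi: "d1 (mon h (W i)) = d2 (mon h (W i))" for h i
    using odd_derD(4)[OF A par_Xi par_X0, of h i 1] odd_derD(4)[OF B par_Xi par_X0, of h i 1]
      Xi h2 by (simp add: mul_XiX0)
  show ?thesis
  proof
    fix a
    have "d1 (sumall a) = d2 (sumall a)"
      unfolding sumall_def odd_derD(1)[OF A] odd_derD(1)[OF B]
      by (simp add: h1 X0 Xi Wi)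
    then show "d1 a = d2 a" by (simp only: sumall[symmetric])
  qed
qed

end



context ck begin

lemma two_cancel:
  assumes two: "(2::'f) \<noteq> 0" and y: "(y::'z) + y = 0" shows "y = 0"
proof -
  have e1: "emb 1 = 1" and ea: "\<And>a b. emb (a + b) = emb a + emb b" and em: "\<And>a b. emb (a * b) = emb a * emb b"
    using emb unfolding alg_emb_def by auto
  have "emb (inverse 2) * emb 2 = 1" using two by (simp add: em[symmetric] e1)
  moreover have "emb 2 = 1 + (1::'z)"
  proof -
    have "emb 2 = emb (1 + 1)" by (simp only: one_add_one)
    also have "\<dots> = 1 + 1" by (simp only: ea e1)
    finally show ?thesis .
  qed
  ultimately have h: "emb (inverse 2) * 2 = (1::'z)" by simp
  have "y = emb (inverse 2) * 2 * y" using h by simp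
  also have "\<dots> = emb (inverse 2) * (y + y)" by (simp only: mult_2 mult.assoc)
  also have "\<dots> = 0" using y by simp
  finally show ?thesis .
qed

lemma mul_one_left: "jmul \<delta> (mon h One) b = (\<lambda>e. h * b e)"
  apply (rule ext) subgoal for e by (cases e rule: cb8; simp add: jm mon_def) done
lemma mul_one_right: "jmul \<delta> b (mon h One) = (\<lambda>e. b e * h)"
  apply (rule ext) subgoal for e by (cases e rule: cb8; simp add: jm mon_def) done
lemma mon_apply: "mon f e c = (if c = e then f else 0)" by (simp add: mon_def)
lemma mul_11: "jmul \<delta> (mon 1 One) (mon 1 One) = mon 1 One"
  apply (rule ext) subgoal for e by (cases e rule: cb8; simp add: jm mon_def) done
lemma mul_XiXi: "jmul \<delta> (mon h (Xi i)) (mon g (Xi j)) = (\<lambda>e. 0)"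
  apply (rule ext) subgoal for e by (cases i; cases j; cases e rule: cb8; simp add: jm mon_def) done
lemma mul_WX0: "jmul \<delta> (mon 1 (W i)) (mon g X0) = (\<lambda>e. 0)"
  apply (rule ext) subgoal for e by (cases i; cases e rule: cb8; simp add: jm mon_def) done

lemma d_zero_fun: assumes A: "odd_der emb \<delta> d" shows "d (\<lambda>e. 0) = (\<lambda>e. 0)"
proof -
  have "jadd (\<lambda>e. 0::'z) (\<lambda>e. 0) = (\<lambda>e. 0)" by (simp add: jadd_def)
  then have "d (\<lambda>e. 0) = jadd (d (\<lambda>e. 0)) (d (\<lambda>e. 0))" using odd_derD(1)[OF A, of "\<lambda>e. 0" "\<lambda>e. 0"] by simp
  then show ?thesis unfolding jadd_def by (metis (no_types) add_cancel_right_right)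
qed

definition Ecl :: "('z jel \<Rightarrow> 'z jel) \<Rightarrow> ('z jel \<Rightarrow> 'z jel)" where
  "Ecl d = (\<lambda>c e. eta (d (mon 1 X0) One) c e + Gx \<delta> I1 (- d (mon 1 (Xi I1)) One) c e
      + Gx \<delta> I2 (- d (mon 1 (Xi I2)) One) c e + Gx \<delta> I3 (d (mon 1 (Xi I3)) One) c e)"

lemma Ecl_odd: "odd_der emb \<delta> (Ecl d)"
  unfolding Ecl_def by (intro odd_add eta_odd Gx_odd)

lemma eq_by: "(a::'z) - b = c \<Longrightarrow> c = 0 \<Longrightarrow> a = b" by simp

lemma eq_by2: "(a::'z) - b = - c \<Longrightarrow> c = 0 \<Longrightarrow> a = b" by simp

lemma classify:
  assumes two: "(2::'f) \<noteq> 0" and A: "odd_der emb \<delta> d"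
  shows "d = Ecl d"
proof -
  have PT: "d (mon f One) \<in> Jpar True" for f using odd_derD(3)[OF A par_One] by simp
  have XF: "d (mon 1 X0) \<in> Jpar False" using odd_derD(3)[OF A par_X0] by simp
  have YF: "d (mon 1 (Xi i)) \<in> Jpar False" for i using odd_derD(3)[OF A par_Xi] by simp
  note Z = PT[unfolded Jpar_T] XF[unfolded Jpar_F] YF[unfolded Jpar_F]
  have dXi: "d (mon f (Xi i)) = jadd (jmul \<delta> (d (mon f One)) (mon 1 (Xi i))) (jmul \<delta> (mon f One) (d (mon 1 (Xi i))))" for f i
    using odd_derD(4)[OF A par_One par_Xi, of f 1 i] by (simp add: mul_oneXi)
  have dX0: "d (mon f X0) = jadd (jmul \<delta> (d (mon f One)) (mon 1 X0)) (jmul \<delta> (mon f One) (d (mon 1 X0)))" for f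
    using odd_derD(4)[OF A par_One par_X0, of f 1] by (simp add: mul_oneX0)
  have dW: "d (mon f (W i)) = jsub (jmul \<delta> (d (mon f (Xi i))) (mon 1 X0)) (jmul \<delta> (mon f (Xi i)) (d (mon 1 X0)))" for f i
    using odd_derD(4)[OF A par_Xi par_X0, of f i 1] by (simp add: mul_XiX0)
  have P1: "d (mon 1 One) e = 0" for e
  proof -
    have "d (mon 1 One) = jadd (jmul \<delta> (d (mon 1 One)) (mon 1 One)) (jmul \<delta> (mon 1 One) (d (mon 1 One)))"
      using odd_derD(4)[OF A par_One par_One, of 1 1] by (simp only: mul_11 if_False)
    then have "d (mon 1 One) e = d (mon 1 One) e + d (mon 1 One) e"
      by (subst (asm) fun_eq_iff) (simp add: jadd_def mul_one_left mul_one_right)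
    then show ?thesis by simp
  qed
  have EQ: "(\<lambda>e. 0) = jsub (jmul \<delta> (d (mon f (Xi i))) (mon 1 (Xi j))) (jmul \<delta> (mon f (Xi i)) (d (mon 1 (Xi j))))" for f i j
    using odd_derD(4)[OF A par_Xi par_Xi, of f i 1 j] by (simp add: mul_XiXi d_zero_fun[OF A])
  have B12: "d (mon f One) X0 = f * (d (mon 1 (Xi I1)) (W I1) + d (mon 1 (Xi I2)) (W I2))" for f
    using fun_cong[OF EQ[of f I1 I2], of "Xi I3"] by (simp add: dXi[of f] jm jsub_def jadd_def mon_apply Z algebra_simps)
  have B23: "d (mon f One) X0 = f * (d (mon 1 (Xi I2)) (W I2) + d (mon 1 (Xi I3)) (W I3))" for f
    using fun_cong[OF EQ[of f I2 I3], of "Xi I1"] by (simp add: dXi[of f] jm jsub_def jadd_def mon_apply Z algebra_simps)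
  have B13: "d (mon f One) X0 = f * (d (mon 1 (Xi I1)) (W I1) + d (mon 1 (Xi I3)) (W I3))" for f
    using fun_cong[OF EQ[of f I1 I3], of "Xi I2"] by (simp add: dXi[of f] jm jsub_def jadd_def mon_apply Z algebra_simps)
  have y0: "d (mon 1 (Xi I1)) (W I1) = 0" "d (mon 1 (Xi I2)) (W I2) = 0" "d (mon 1 (Xi I3)) (W I3) = 0"
  proof -
    have s1: "d (mon 1 (Xi I1)) (W I1) + d (mon 1 (Xi I2)) (W I2) = 0" using B12[of 1] P1 by simp
    have s2: "d (mon 1 (Xi I2)) (W I2) + d (mon 1 (Xi I3)) (W I3) = 0" using B23[of 1] P1 by simp
    have s3: "d (mon 1 (Xi I1)) (W I1) + d (mon 1 (Xi I3)) (W I3) = 0" using B13[of 1] P1 by simp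
    have "d (mon 1 (Xi I1)) (W I1) + d (mon 1 (Xi I1)) (W I1) = 0"
      using s1 s2 s3 by (simp add: algebra_simps eq_neg_iff_add_eq_0[symmetric] add_eq_0_iff2)
    then show "d (mon 1 (Xi I1)) (W I1) = 0" by (rule two_cancel[OF two])
    then show "d (mon 1 (Xi I2)) (W I2) = 0" using s1 by simp
    then show "d (mon 1 (Xi I3)) (W I3) = 0" using s2 by simp
  qed
  have P0: "d (mon f One) X0 = 0" for f using B12[of f] y0 by simp
  have EQ2: "(\<lambda>e. 0) = jadd (jmul \<delta> (d (mon 1 (W i))) (mon g X0)) (jmul \<delta> (mon 1 (W i)) (d (mon g X0)))" for g i
    using odd_derD(4)[OF A par_W[of 1 i] par_X0[of g]] by (simp add: mul_WX0 d_zero_fun[OF A])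
  have C1: "\<delta> (d (mon 1 (Xi I1)) One) * g - d (mon 1 (Xi I1)) One * \<delta> g + (d (mon g One) (Xi I1) + g * d (mon 1 X0) (W I1)) = 0" for g
    using fun_cong[OF EQ2[where i=I1 and g=g], of One] by (simp add: dW[of 1] dX0[of g] jm jsub_def jadd_def mon_apply Z algebra_simps)
  have C2: "\<delta> (d (mon 1 (Xi I2)) One) * g - d (mon 1 (Xi I2)) One * \<delta> g + (d (mon g One) (Xi I2) + g * d (mon 1 X0) (W I2)) = 0" for g
    using fun_cong[OF EQ2[where i=I2 and g=g], of One] by (simp add: dW[of 1] dX0[of g] jm jsub_def jadd_def mon_apply Z algebra_simps)
  have C3: "\<delta> (d (mon 1 (Xi I3)) One) * g - d (mon 1 (Xi I3)) One * \<delta> g - (d (mon g One) (Xi I3) + g * d (mon 1 X0) (W I3)) = 0" for g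
    using fun_cong[OF EQ2[where i=I3 and g=g], of One] by (simp add: dW[of 1] dX0[of g] jm jsub_def jadd_def mon_apply Z algebra_simps)
  have X1: "d (mon 1 X0) (W I1) = - \<delta> (d (mon 1 (Xi I1)) One)"
    by (rule eq_by[OF _ C1[of 1]]) (simp add: P1 algebra_simps)
  have X2: "d (mon 1 X0) (W I2) = - \<delta> (d (mon 1 (Xi I2)) One)"
    by (rule eq_by[OF _ C2[of 1]]) (simp add: P1 algebra_simps)
  have X3: "d (mon 1 X0) (W I3) = \<delta> (d (mon 1 (Xi I3)) One)"
    by (rule eq_by2[OF _ C3[of 1]]) (simp add: P1 algebra_simps)
  have F1: "d (mon f One) (Xi I1) = d (mon 1 (Xi I1)) One * \<delta> f" for f
    by (rule eq_by[OF _ C1[of f]]) (simp add: X1 algebra_simps)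
  have F2: "d (mon f One) (Xi I2) = d (mon 1 (Xi I2)) One * \<delta> f" for f
    by (rule eq_by[OF _ C2[of f]]) (simp add: X2 algebra_simps)
  have F3: "d (mon f One) (Xi I3) = - (d (mon 1 (Xi I3)) One * \<delta> f)" for f
    by (rule eq_by2[OF _ C3[of f]]) (simp add: X3 algebra_simps)
  have D21: "d (mon 1 (Xi I2)) One + d (mon 1 (Xi I1)) (W I3) = 0"
    using fun_cong[OF EQ[of 1 I2 I1], of "Xi I1"] by (simp add: jm jsub_def jadd_def mon_apply Z algebra_simps)
  have D31: "d (mon 1 (Xi I3)) One - d (mon 1 (Xi I1)) (W I2) = 0"
    using fun_cong[OF EQ[of 1 I3 I1], of "Xi I1"] by (simp add: jm jsub_def jadd_def mon_apply Z algebra_simps)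
  have D12: "d (mon 1 (Xi I1)) One - d (mon 1 (Xi I2)) (W I3) = 0"
    using fun_cong[OF EQ[of 1 I1 I2], of "Xi I2"] by (simp add: jm jsub_def jadd_def mon_apply Z algebra_simps)
  have D32: "d (mon 1 (Xi I3)) One + d (mon 1 (Xi I2)) (W I1) = 0"
    using fun_cong[OF EQ[of 1 I3 I2], of "Xi I2"] by (simp add: jm jsub_def jadd_def mon_apply Z algebra_simps)
  have D13: "d (mon 1 (Xi I1)) One - d (mon 1 (Xi I3)) (W I2) = 0"
    using fun_cong[OF EQ[of 1 I1 I3], of "Xi I3"] by (simp add: jm jsub_def jadd_def mon_apply Z algebra_simps)
  have D23: "d (mon 1 (Xi I2)) One + d (mon 1 (Xi I3)) (W I1) = 0"
    using fun_cong[OF EQ[of 1 I2 I3], of "Xi I3"] by (simp add: jm jsub_def jadd_def mon_apply Z algebra_simps)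
  show ?thesis
  proof (rule det[OF A Ecl_odd])
    show "d (mon f One) = Ecl d (mon f One)" for f
      apply (rule ext) subgoal for e
        by (cases e rule: cb8; simp add: Ecl_def eta_def mon_apply Z P0 F1 F2 F3 algebra_simps) done
    show "d (mon 1 X0) = Ecl d (mon 1 X0)"
      apply (rule ext) subgoal for e
        by (cases e rule: cb8; simp add: Ecl_def eta_def mon_apply Z X1 X2 X3 algebra_simps) done
    show "d (mon 1 (Xi i)) = Ecl d (mon 1 (Xi i))" for i
      apply (rule ext) subgoal for e
        using D21 D31 D12 D32 D13 D23 y0
        by (cases i; cases e rule: cb8; simp add: Ecl_def eta_def mon_apply Z algebra_simps eq_neg_iff_add_eq_0) done
  qed
qed
end



lemma mon_deg: "mon h e \<in> Jdeg (deg e)"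
  unfolding Jdeg_def mon_def by auto

context ck begin

lemma Gd_eq: "Dop \<delta> False True (mon 1 (W i)) (mon g X0) = Gx \<delta> i g"
  apply (rule ext)+
  subgoal for c e
    by (cases i; cases e rule: cb8; simp add: Dop_def jm mon_def; simp add: algebra_simps)
  done

lemma Deta_eq: "Dop \<delta> False True (mon f One) (mon g X0) = eta (g * \<delta> f)"
  apply (rule ext)+
  subgoal for c e
    by (cases e rule: cb8; simp add: Dop_def jm mon_def eta_def; simp add: algebra_simps)
  done

lemma Gx_zero: "Gx \<delta> i 0 c e = 0"
  by (cases i; cases e rule: cb8; simp)
lemma eta_zero: "eta 0 c e = 0"
  by (cases e rule: cb8; simp add: eta_def)

lemma Der1_zero:
  assumes "d \<in> Der1 emb \<delta> \<alpha>" "deg One \<noteq> gadd \<alpha> (deg e)"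
  shows "d (mon 1 e) One = 0"
proof -
  have "d (mon 1 e) \<in> Jdeg (gadd \<alpha> (deg e))" using assms(1) mon_deg[of 1 e] unfolding Der1_def by blast
  then show ?thesis using assms(2) unfolding Jdeg_def by blast
qed

lemma Der1_FF:
  assumes two: "(2::'f) \<noteq> 0" and d: "d \<in> Der1 emb \<delta> (False, False)"
  shows "d = eta (d (mon 1 X0) One)"
proof -
  have o: "odd_der emb \<delta> d" using d unfolding Der1_def by blast
  have z: "d (mon 1 (Xi I1)) One = 0" "d (mon 1 (Xi I2)) One = 0" "d (mon 1 (Xi I3)) One = 0"
    using Der1_zero[OF d] by (simp_all add: gadd_def)
  show ?thesis
    apply (subst classify[OF two o])
    apply (rule ext)+
    by (simp add: Ecl_def z Gx_zero)
qed

lemma Der1_W1: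
  assumes two: "(2::'f) \<noteq> 0" and d: "d \<in> Der1 emb \<delta> (True, False)"
  shows "d = Gx \<delta> I1 (- d (mon 1 (Xi I1)) One)"
proof -
  have o: "odd_der emb \<delta> d" using d unfolding Der1_def by blast
  have z: "d (mon 1 X0) One = 0" "d (mon 1 (Xi I2)) One = 0" "d (mon 1 (Xi I3)) One = 0"
    using Der1_zero[OF d] by (simp_all add: gadd_def)
  show ?thesis
    apply (subst classify[OF two o])
    apply (rule ext)+
    by (simp add: Ecl_def z Gx_zero eta_zero)
qed

lemma Der1_W2:
  assumes two: "(2::'f) \<noteq> 0" and d: "d \<in> Der1 emb \<delta> (False, True)"
  shows "d = Gx \<delta> I2 (- d (mon 1 (Xi I2)) One)"
proof -
  have o: "odd_der emb \<delta> d" using d unfolding Der1_def by blast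
  have z: "d (mon 1 X0) One = 0" "d (mon 1 (Xi I1)) One = 0" "d (mon 1 (Xi I3)) One = 0"
    using Der1_zero[OF d] by (simp_all add: gadd_def)
  show ?thesis
    apply (subst classify[OF two o])
    apply (rule ext)+
    by (simp add: Ecl_def z Gx_zero eta_zero)
qed

lemma Der1_W3:
  assumes two: "(2::'f) \<noteq> 0" and d: "d \<in> Der1 emb \<delta> (True, True)"
  shows "d = Gx \<delta> I3 (d (mon 1 (Xi I3)) One)"
proof -
  have o: "odd_der emb \<delta> d" using d unfolding Der1_def by blast
  have z: "d (mon 1 X0) One = 0" "d (mon 1 (Xi I1)) One = 0" "d (mon 1 (Xi I2)) One = 0"
    using Der1_zero[OF d] by (simp_all add: gadd_def)
  show ?thesis
    apply (subst classify[OF two o])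
    apply (rule ext)+
    by (simp add: Ecl_def z Gx_zero eta_zero)
qed

lemma d_sum: "\<delta> (\<Sum>k<(n::nat). emb (c k) * r k) = (\<Sum>k<n. emb (c k) * \<delta> (r k))"
  by (induction n) simp_all

lemma Gx_lin: "Gx \<delta> i g c e = g * Gx \<delta> i 1 c e + \<delta> g * (if e = W i then c X0 else 0)"
  by (cases i; cases e rule: cb8; simp add: algebra_simps)

lemma Gx_comb: "(\<lambda>a e. \<Sum>k<(n::nat). emb (c k) * Gx \<delta> i (r k) a e) = Gx \<delta> i (\<Sum>k<n. emb (c k) * r k)"
proof (intro ext)
  fix a e
  have "(\<Sum>k<n. emb (c k) * Gx \<delta> i (r k) a e)
     = (\<Sum>k<n. emb (c k) * r k) * Gx \<delta> i 1 a e + (\<Sum>k<n. emb (c k) * \<delta> (r k)) * (if e = W i then a X0 else 0)"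
    by (subst Gx_lin) (simp add: distrib_left sum_distrib_right sum_distrib_left sum.distrib mult_ac)
  also have "\<dots> = Gx \<delta> i (\<Sum>k<n. emb (c k) * r k) a e"
    by (subst (2) Gx_lin) (simp add: d_sum)
  finally show "(\<Sum>k<n. emb (c k) * Gx \<delta> i (r k) a e) = Gx \<delta> i (\<Sum>k<n. emb (c k) * r k) a e" .
qed

lemma eta_comb: "(\<lambda>a e. \<Sum>k<(n::nat). emb (c k) * eta (r k) a e) = eta (\<Sum>k<n. emb (c k) * r k)"
  apply (intro ext) subgoal for a e
    by (cases e rule: cb8; simp add: eta_def sum_distrib_right sum_distrib_left sum_negf mult_ac) done

lemma fspan_single: "s \<in> S \<Longrightarrow> s \<in> fspan emb S"
proof -
  assume s: "s \<in> S"
  have e1: "emb 1 = 1" using emb unfolding alg_emb_def by auto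
  show ?thesis unfolding fspan_def
    by (rule CollectI, rule exI[of _ 1], rule exI[of _ "\<lambda>_. 1"], rule exI[of _ "\<lambda>_. s"]) (simp add: s e1)
qed

lemma fspan_G: "fspan emb {Dop \<delta> False True (mon 1 (W i)) (mon g X0) | g. True} = range (Gx \<delta> i)"
proof
  show "fspan emb {Dop \<delta> False True (mon 1 (W i)) (mon g X0) | g. True} \<subseteq> range (Gx \<delta> i)"
  proof
    fix d assume "d \<in> fspan emb {Dop \<delta> False True (mon 1 (W i)) (mon g X0) | g. True}"
    then obtain n :: nat and c s where s: "\<forall>k<n. s k \<in> {Dop \<delta> False True (mon 1 (W i)) (mon g X0) | g. True}"
      and d: "d = (\<lambda>a e. \<Sum>k<n. emb (c k) * s k a e)" unfolding fspan_def by blast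
    have "\<forall>k<n. \<exists>g. s k = Gx \<delta> i g" using s by (auto simp: Gd_eq)
    then obtain r where r: "\<forall>k<n. s k = Gx \<delta> i (r k)" by metis
    have "d = (\<lambda>a e. \<Sum>k<n. emb (c k) * Gx \<delta> i (r k) a e)" unfolding d using r by simp
    then show "d \<in> range (Gx \<delta> i)" by (simp add: Gx_comb)
  qed
next
  show "range (Gx \<delta> i) \<subseteq> fspan emb {Dop \<delta> False True (mon 1 (W i)) (mon g X0) | g. True}"
    by (auto intro!: fspan_single simp: Gd_eq)
qed

end



context ck begin

lemma eta_tilde_eq: "eta_tilde emb \<delta> r = eta r"
  unfolding eta_tilde_def
proof (rule the_equality)
  show "odd_der emb \<delta> (eta r) \<and> (\<forall>f. eta r (mon f One) = mon 0 One) \<and> eta r (mon 1 X0) = mon r One \<and> (\<forall>j. eta r (mon 1 (Xi j)) = mon 0 One)"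
  proof (intro conjI allI eta_odd)
    show "eta r (mon f One) = mon 0 One" for f
      by (rule ext) (simp add: eta_def mon_def split: cb.split)
    show "eta r (mon 1 X0) = mon r One"
      by (rule ext) (simp add: eta_def mon_def split: cb.split)
    show "eta r (mon 1 (Xi j)) = mon 0 One" for j
      by (rule ext) (simp add: eta_def mon_def split: cb.split)
  qed
next
  fix d assume h: "odd_der emb \<delta> d \<and> (\<forall>f. d (mon f One) = mon 0 One) \<and> d (mon 1 X0) = mon r One \<and> (\<forall>j. d (mon 1 (Xi j)) = mon 0 One)"
  show "d = eta r"
  proof (rule det)
    show "odd_der emb \<delta> d" using h by blast
    show "odd_der emb \<delta> (eta r)" by (rule eta_odd)
    show "d (mon f One) = eta r (mon f One)" for f
      using h by (intro ext) (simp add: eta_def mon_def split: cb.split)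
    show "d (mon 1 X0) = eta r (mon 1 X0)"
      using h by (intro ext) (simp add: eta_def mon_def split: cb.split)
    show "d (mon 1 (Xi i)) = eta r (mon 1 (Xi i))" for i
      using h by (intro ext) (simp add: eta_def mon_def split: cb.split)
  qed
qed

lemma fspan_eta:
  assumes Zd: "Z_delta_Z emb \<delta>"
  shows "fspan emb {Dop \<delta> False True (mon f One) (mon g X0) | f g. True} = range eta"
proof
  show "fspan emb {Dop \<delta> False True (mon f One) (mon g X0) | f g. True} \<subseteq> range eta"
  proof
    fix d assume "d \<in> fspan emb {Dop \<delta> False True (mon f One) (mon g X0) | f g. True}"
    then obtain n :: nat and c s where s: "\<forall>k<n. s k \<in> {Dop \<delta> False True (mon f One) (mon g X0) | f g. True}"
      and d: "d = (\<lambda>a e. \<Sum>k<n. emb (c k) * s k a e)" unfolding fspan_def by blast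
    have "\<forall>k<n. \<exists>r. s k = eta r" using s by (auto simp: Deta_eq)
    then obtain r where r: "\<forall>k<n. s k = eta (r k)" by metis
    have "d = (\<lambda>a e. \<Sum>k<n. emb (c k) * eta (r k) a e)" unfolding d using r by simp
    then show "d \<in> range eta" by (simp add: eta_comb)
  qed
next
  show "range eta \<subseteq> fspan emb {Dop \<delta> False True (mon f One) (mon g X0) | f g. True}"
  proof
    fix d :: "'z jel \<Rightarrow> 'z jel" assume "d \<in> range eta"
    then obtain r where dr: "d = eta r" by blast
    obtain n :: nat and c f g where r: "r = (\<Sum>k<n. emb (c k) * (f k * \<delta> (g k)))"
      using Zd unfolding Z_delta_Z_def by blast
    have "d = (\<lambda>a e. \<Sum>k<n. emb (c k) * Dop \<delta> False True (mon (g k) One) (mon (f k) X0) a e)"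
      by (simp add: Deta_eq eta_comb dr r)
    then show "d \<in> fspan emb {Dop \<delta> False True (mon f One) (mon g X0) | f g. True}"
      unfolding fspan_def
      by (intro CollectI exI[of _ n] exI[of _ c] exI[of _ "\<lambda>k. Dop \<delta> False True (mon (g k) One) (mon (f k) X0)"]) blast
  qed
qed

end

theorem proposition4p3:
  fixes emb :: "'f::field \<Rightarrow> 'z::comm_ring_1" and \<delta> :: "'z \<Rightarrow> 'z"
  assumes "(2::'f) \<noteq> 0"
    and "alg_emb emb"
    and "is_derivation emb \<delta>"
    and "Z_delta_Z emb \<delta>"
  shows "Der1 emb \<delta> (False, False) = fspan emb {Dop \<delta> False True (mon f One) (mon g X0) | f g. True}
    \<and> fspan emb {Dop \<delta> False True (mon f One) (mon g X0) | f g. True} = range (eta_tilde emb \<delta>)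
    \<and> Der1 emb \<delta> (True, False) = fspan emb {Dop \<delta> False True (mon 1 (W I1)) (mon g X0) | g. True}
    \<and> Der1 emb \<delta> (False, True) = fspan emb {Dop \<delta> False True (mon 1 (W I2)) (mon g X0) | g. True}
    \<and> Der1 emb \<delta> (True, True) = fspan emb {Dop \<delta> False True (mon 1 (W I3)) (mon g X0) | g. True}
    \<and> (\<forall>d. odd_der emb \<delta> d \<longrightarrow>
         (\<exists>!(d1, d2, d3, d4).
            d1 \<in> Der1 emb \<delta> (False, False) \<and> d2 \<in> Der1 emb \<delta> (True, False) \<and>
            d3 \<in> Der1 emb \<delta> (False, True) \<and> d4 \<in> Der1 emb \<delta> (True, True) \<and>
            d = (\<lambda>a e. d1 a e + d2 a e + d3 a e + d4 a e)))"
proof -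
  interpret ck emb \<delta> using assms(2,3) by unfold_locales
  note two = assms(1)
  have R0: "Der1 emb \<delta> (False, False) = range eta"
  proof
    show "Der1 emb \<delta> (False, False) \<subseteq> range eta"
      using Der1_FF[OF two] by blast
    show "range eta \<subseteq> Der1 emb \<delta> (False, False)" using eta_Der1 by blast
  qed
  have R1: "Der1 emb \<delta> (True, False) = range (Gx \<delta> I1)"
  proof
    show "Der1 emb \<delta> (True, False) \<subseteq> range (Gx \<delta> I1)"
      using Der1_W1[OF two] by blast
    show "range (Gx \<delta> I1) \<subseteq> Der1 emb \<delta> (True, False)" using G_Der1[of I1] by auto
  qed
  have R2: "Der1 emb \<delta> (False, True) = range (Gx \<delta> I2)"
  proof
    show "Der1 emb \<delta> (False, True) \<subseteq> range (Gx \<delta> I2)"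
      using Der1_W2[OF two] by blast
    show "range (Gx \<delta> I2) \<subseteq> Der1 emb \<delta> (False, True)" using G_Der1[of I2] by auto
  qed
  have R3: "Der1 emb \<delta> (True, True) = range (Gx \<delta> I3)"
  proof
    show "Der1 emb \<delta> (True, True) \<subseteq> range (Gx \<delta> I3)"
      using Der1_W3[OF two] by blast
    show "range (Gx \<delta> I3) \<subseteq> Der1 emb \<delta> (True, True)" using G_Der1[of I3] by auto
  qed
  have ET: "eta_tilde emb \<delta> = eta" by (rule ext) (rule eta_tilde_eq)
  have U: "\<exists>!(d1, d2, d3, d4).
            d1 \<in> Der1 emb \<delta> (False, False) \<and> d2 \<in> Der1 emb \<delta> (True, False) \<and>
            d3 \<in> Der1 emb \<delta> (False, True) \<and> d4 \<in> Der1 emb \<delta> (True, True) \<and>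
            d = (\<lambda>a e. d1 a e + d2 a e + d3 a e + d4 a e)" if o: "odd_der emb \<delta> d" for d
  proof (rule ex1I[of _ "(eta (d (mon 1 X0) One), Gx \<delta> I1 (- d (mon 1 (Xi I1)) One),
                          Gx \<delta> I2 (- d (mon 1 (Xi I2)) One), Gx \<delta> I3 (d (mon 1 (Xi I3)) One))"])
    show "case (eta (d (mon 1 X0) One), Gx \<delta> I1 (- d (mon 1 (Xi I1)) One),
                          Gx \<delta> I2 (- d (mon 1 (Xi I2)) One), Gx \<delta> I3 (d (mon 1 (Xi I3)) One)) of
          (d1, d2, d3, d4) \<Rightarrow> d1 \<in> Der1 emb \<delta> (False, False) \<and> d2 \<in> Der1 emb \<delta> (True, False) \<and>
            d3 \<in> Der1 emb \<delta> (False, True) \<and> d4 \<in> Der1 emb \<delta> (True, True) \<and>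
            d = (\<lambda>a e. d1 a e + d2 a e + d3 a e + d4 a e)"
      using classify[OF two o] by (simp add: R0 R1 R2 R3 Ecl_def)
  next
    fix y assume hy: "case y of (d1, d2, d3, d4) \<Rightarrow> d1 \<in> Der1 emb \<delta> (False, False) \<and> d2 \<in> Der1 emb \<delta> (True, False) \<and>
            d3 \<in> Der1 emb \<delta> (False, True) \<and> d4 \<in> Der1 emb \<delta> (True, True) \<and>
            d = (\<lambda>a e. d1 a e + d2 a e + d3 a e + d4 a e)"
    obtain d1 d2 d3 d4 where y: "y = (d1, d2, d3, d4)" by (cases y) auto
    from hy y obtain a g1 g2 g3 where e1: "d1 = eta a" and e2: "d2 = Gx \<delta> I1 g1" and e3: "d3 = Gx \<delta> I2 g2"
        and e4: "d4 = Gx \<delta> I3 g3" and dd: "d = (\<lambda>a e. d1 a e + d2 a e + d3 a e + d4 a e)"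
      by (auto simp: R0 R1 R2 R3)
    have "d (mon 1 X0) One = a" "d (mon 1 (Xi I1)) One = - g1" "d (mon 1 (Xi I2)) One = - g2" "d (mon 1 (Xi I3)) One = g3"
      by (simp_all add: dd e1 e2 e3 e4 eta_def mon_apply)
    then show "y = (eta (d (mon 1 X0) One), Gx \<delta> I1 (- d (mon 1 (Xi I1)) One),
                          Gx \<delta> I2 (- d (mon 1 (Xi I2)) One), Gx \<delta> I3 (d (mon 1 (Xi I3)) One))"
      by (simp add: y e1 e2 e3 e4)
  qed
  have U': "\<forall>d. odd_der emb \<delta> d \<longrightarrow>
         (\<exists>!(d1, d2, d3, d4).
            d1 \<in> Der1 emb \<delta> (False, False) \<and> d2 \<in> Der1 emb \<delta> (True, False) \<and>
            d3 \<in> Der1 emb \<delta> (False, True) \<and> d4 \<in> Der1 emb \<delta> (True, True) \<and>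
            d = (\<lambda>a e. d1 a e + d2 a e + d3 a e + d4 a e))" using U by blast
  note FE = fspan_eta[OF assms(4)]
  show ?thesis
    unfolding FE fspan_G ET using U' by (simp only: R0 R1 R2 R3 simp_thms)
qed


end
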